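(* Let $c>0$ and let $\nu,\tilde\nu$ be probability measures on $\mathbb R_+$ different from $\boldsymbol d_0$, and assume that at least one of $\nu,\tilde\nu$ is not a Dirac (point mass) measure. Let $(\boldsymbol{\tilde\delta}_a,a)$ with $\boldsymbol{\tilde\delta}_a\in\widetilde{\mathcal D}$, $a\neq0$, and $\boldsymbol\delta_a:=c\int\frac{t}{-a(1+\boldsymbol{\tilde\delta}_a t)}\nu(dt)\in\mathcal D$, satisfy $$\boldsymbol F(\boldsymbol{\tilde\delta}_a,a)=0,\qquad\frac{\partial\boldsymbol F}{\partial\boldsymbol{\tilde\delta}}(\boldsymbol{\tilde\delta}_a,a)=0,$$ where $\boldsymbol F(\tilde\delta,x)=\int\frac{t}{-x+ct\int\frac{u}{1+u\tilde\delta}\nu(du)}\tilde\nu(dt)-\tilde\delta$ for real $(\tilde\delta,x)$ near $(\boldsymbol{\tilde\delta}_a,a)$. Then $$\frac{\partial^2\boldsymbol F}{\partial\boldsymbol{\tilde\delta}^2}(\boldsymbol{\tilde\delta}_a,a)=0\ \Longrightarrow\ \frac{\partial^3\boldsymbol F}{\partial\boldsymbol{\tilde\delta}^3}(\boldsymbol{\tilde\delta}_a,a)\neq0.$$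
   Context: $\boldsymbol d_0$ is the Dirac mass at $0$. Define $\mathcal D=\{0\}\cup\{\boldsymbol\delta\in\mathbb R\setminus\{0\}:-\boldsymbol\delta^{-1}\notin\operatorname{supp}(\tilde\nu)\}$ if $\operatorname{supp}(\tilde\nu)$ is compact and $\mathcal D=\{\boldsymbol\delta\in\mathbb R\setminus\{0\}:-\boldsymbol\delta^{-1}\notin\operatorname{supp}(\tilde\nu)\}$ otherwise; $\widetilde{\mathcal D}$ is defined in the same way with $\nu$ in place of $\tilde\nu$. These conditions ensure $\boldsymbol F$ is well defined and smooth near $(\boldsymbol{\tilde\delta}_a,a)$, with differentiation under the integral allowed. *)

theory Defs
  imports "HOL-Probability.Probability"
begin

definition msupp :: "real measure \<Rightarrow> real set" where
  "msupp M = {x. \<forall>e>0. emeasure M (ball x e) > 0}"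

text \<open>The domain D associated with a measure M (D uses nu-tilde, D-tilde uses nu).\<close>
definition Dset :: "real measure \<Rightarrow> real set" where
  "Dset M = (if compact (msupp M)
             then {0} \<union> {d. d \<noteq> 0 \<and> - inverse d \<notin> msupp M}
             else {d. d \<noteq> 0 \<and> - inverse d \<notin> msupp M})"

definition Fmap :: "real \<Rightarrow> real measure \<Rightarrow> real measure \<Rightarrow> real \<Rightarrow> real \<Rightarrow> real" where
  "Fmap c nu nt dt x =
     (\<integral>t. t / (- x + c * t * (\<integral>u. u / (1 + u * dt) \<partial>nu)) \<partial>nt) - dt"

definition prob_Rplus :: "real measure \<Rightarrow> bool" where
  "prob_Rplus M \<longleftrightarrow> prob_space M \<and> sets M = sets borel \<and> (AE t in M. 0 \<le> t)"

end

theory Submission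
  imports Defs
begin


lemma deriv_from_quad:
  fixes f :: "real \<Rightarrow> real"
  assumes d: "\<delta> > 0" and b: "\<And>h. \<bar>h\<bar> < \<delta> \<Longrightarrow> \<bar>f (x+h) - f x - h*D\<bar> \<le> K*h\<^sup>2"
  shows "(f has_real_derivative D) (at x)"
proof -
  have ev: "eventually (\<lambda>h. norm ((f (x+h) - f x)/h - D) \<le> K * \<bar>h\<bar>) (at 0)"
    unfolding eventually_at
  proof (intro exI[of _ \<delta>] conjI ballI impI)
    show "\<delta> > 0" by (rule d)
    fix h :: real assume h: "h \<noteq> 0 \<and> dist h 0 < \<delta>"
    hence hd: "\<bar>h\<bar> < \<delta>" by simp
    have hp: "\<bar>h\<bar> > 0" using h by simp
    have q: "(f (x+h) - f x)/h - D = (f (x+h) - f x - h*D)/h" using h by (simp add: field_simps)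
    have "\<bar>(f (x+h) - f x - h*D)/h\<bar> = \<bar>f (x+h) - f x - h*D\<bar>/\<bar>h\<bar>" by (rule abs_divide)
    also have "\<dots> \<le> K*h\<^sup>2/\<bar>h\<bar>" using b[OF hd] hp by (intro divide_right_mono) auto
    also have "K*h\<^sup>2/\<bar>h\<bar> = K * \<bar>h\<bar>" using hp
      by (simp add: power2_eq_square divide_simps)
    finally show "norm ((f (x+h) - f x)/h - D) \<le> K * \<bar>h\<bar>" using q by simp
  qed
  have "((\<lambda>h. K * \<bar>h\<bar>) \<longlongrightarrow> K * \<bar>0\<bar>) (at (0::real))"
    by (intro tendsto_mult tendsto_const tendsto_rabs tendsto_ident_at)
  hence "((\<lambda>h. K * \<bar>h\<bar>) \<longlongrightarrow> 0) (at (0::real))" by simp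
  from Lim_null_comparison[OF ev this]
  have "((\<lambda>h. (f (x+h) - f x)/h - D) \<longlongrightarrow> 0) (at 0)" .
  hence "((\<lambda>h. (f (x+h) - f x)/h) \<longlongrightarrow> D) (at 0)"
    using tendsto_add_const_iff[of "-D"] by (simp add: Lim_null[symmetric])
  thus ?thesis by (simp add: DERIV_def)
qed

lemma frac_bound:
  fixes p q B L :: real
  assumes "\<bar>p\<bar> \<le> B" "q \<ge> L" "L > 0" "B/L \<le> 100"
  shows "\<bar>p/q\<bar> \<le> 100"
proof -
  have q: "q > 0" using assms by linarith
  have "\<bar>p/q\<bar> = \<bar>p\<bar>/q" using q by (simp add: abs_divide)
  also have "\<dots> \<le> B/L" using assms q by (intro frac_le) auto
  finally show ?thesis using assms by linarith
qed

lemma rem_bound: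
  fixes y h M :: real
  assumes y: "\<bar>y\<bar> \<le> M" and hy: "\<bar>h*y\<bar> \<le> 1/2" and k: "k \<in> {1,2,3::nat}"
  shows "\<bar>(y/(1+h*y))^k - y^k + h*k*y^(k+1)\<bar> \<le> h\<^sup>2 * (100 * (M+1)^5)"
proof -
  define w where "w = h*y"
  have w: "\<bar>w\<bar> \<le> 1/2" using hy w_def by simp
  have w1: "1 + w \<ge> 1/2" using w by linarith
  have M0: "M \<ge> 0" using y by linarith
  have yk: "\<bar>y\<bar>^(k+2) \<le> (M+1)^5"
  proof -
    have "\<bar>y\<bar>^(k+2) \<le> (M+1)^(k+2)" using y by (intro power_mono) auto
    also have "\<dots> \<le> (M+1)^5" using k M0 by (intro power_increasing) auto
    finally show ?thesis .
  qed
  obtain P where eq: "(y/(1+h*y))^k - y^k + h*k*y^(k+1) = h\<^sup>2 * y^(k+2) * P"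
     and P: "\<bar>P\<bar> \<le> 100"
  proof -
    consider "k = 1" | "k = 2" | "k = 3" using k by auto
    then show ?thesis
    proof cases
      case 1
      have e: "(y/(1+h*y))^k - y^k + h*k*y^(k+1) = h\<^sup>2 * y^(k+2) * (1/(1+w))"
        using 1 w1 unfolding w_def by (simp add: field_simps power2_eq_square power3_eq_cube)
      have "\<bar>1/(1+w)\<bar> \<le> 100" using w1 by (simp add: divide_le_eq)
      with e that show ?thesis by blast
    next
      case 2
      have e: "(y/(1+h*y))^k - y^k + h*k*y^(k+1) = h\<^sup>2 * y^(k+2) * ((3+2*w)/(1+w)^2)"
      proof -
        have nz: "1 + w \<noteq> 0" using w1 by linarith
        have "(y/(1+h*y))^k - y^k + h*k*y^(k+1) = y^k * (1/(1+w)^k - 1 + k*w)"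
          unfolding w_def by (simp add: power_divide algebra_simps)
        also have "1/(1+w)^k - 1 + k*w = w^2 * ((3+2*w)/(1+w)^2)" using nz unfolding 2 by (simp add: divide_simps) (simp add: algebra_simps power2_eq_square power3_eq_cube)
        also have "y^k * (w^2 * ((3+2*w)/(1+w)^2)) = h\<^sup>2 * y^(k+2) * ((3+2*w)/(1+w)^2)" unfolding w_def power_mult_distrib power_add by (simp add: mult_ac)
        finally show ?thesis .
      qed
      have p: "(1+w)^2 \<ge> 1/4" using w1 power_mono[OF _ _, of "1/2" "1+w" 2] by (simp add: power2_eq_square)
      have "\<bar>3+2*w\<bar> \<le> 4" using w by linarith
      hence "\<bar>(3+2*w)/(1+w)^2\<bar> \<le> 100"
        using p by (intro frac_bound[where B=4 and L="1/4"]) auto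
      with e that show ?thesis by blast
    next
      case 3
      have e: "(y/(1+h*y))^k - y^k + h*k*y^(k+1) = h\<^sup>2 * y^(k+2) * ((6+8*w+3*w^2)/(1+w)^3)"
      proof -
        have nz: "1 + w \<noteq> 0" using w1 by linarith
        have "(y/(1+h*y))^k - y^k + h*k*y^(k+1) = y^k * (1/(1+w)^k - 1 + k*w)"
          unfolding w_def by (simp add: power_divide algebra_simps)
        also have "1/(1+w)^k - 1 + k*w = w^2 * ((6+8*w+3*w^2)/(1+w)^3)" using nz unfolding 3 by (simp add: divide_simps) (simp add: algebra_simps power2_eq_square power3_eq_cube)
        also have "y^k * (w^2 * ((6+8*w+3*w^2)/(1+w)^3)) = h\<^sup>2 * y^(k+2) * ((6+8*w+3*w^2)/(1+w)^3)" unfolding w_def power_mult_distrib power_add by (simp add: mult_ac)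
        finally show ?thesis .
      qed
      have "(1+w)^3 \<ge> (1/2)^3" using w1 by (intro power_mono) auto
      hence p: "(1+w)^3 \<ge> 1/8" by (simp add: power_divide)
      have "\<bar>w\<bar>^2 \<le> (1/2)^2" using w by (intro power_mono) auto
      hence w2: "w^2 \<le> 1/4" by (simp add: power2_abs power_divide)
      have w3: "w^2 \<ge> 0" by simp
      have wl: "-1/2 \<le> w" "w \<le> 1/2" using w by auto
      have "6+8*w+3*w^2 \<le> 11" "-(6+8*w+3*w^2) \<le> 11" using wl w2 w3 by linarith+
      hence "\<bar>6+8*w+3*w^2\<bar> \<le> 11" by (simp only: abs_le_iff)
      hence "\<bar>(6+8*w+3*w^2)/(1+w)^3\<bar> \<le> 100"
        using p by (intro frac_bound[where B=11 and L="1/8"]) auto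
      with e that show ?thesis by blast
    qed
  qed
  have "\<bar>h\<^sup>2 * y^(k+2) * P\<bar> = h\<^sup>2 * \<bar>y\<bar>^(k+2) * \<bar>P\<bar>" by (simp add: abs_mult power_abs)
  also have "\<dots> \<le> h\<^sup>2 * (M+1)^5 * 100"
    using yk P M0 by (intro mult_mono) auto
  finally have B: "\<bar>h\<^sup>2 * y^(k+2) * P\<bar> \<le> h\<^sup>2 * (M+1)^5 * 100" .
  have C: "h\<^sup>2 * (M+1)^5 * 100 = h\<^sup>2 * (100 * (M+1)^5)" by (simp only: mult_ac)
  show ?thesis unfolding eq using B C by linarith
qed



definition Mom :: "real measure \<Rightarrow> real \<Rightarrow> nat \<Rightarrow> real \<Rightarrow> real" where
  "Mom M b k s = (\<integral>t. (t/(b + s*t))^k \<partial>M)"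

lemma meas_y:
  fixes M :: "real measure" and b s :: real
  assumes "sets M = sets borel"
  shows "(\<lambda>t. (t/(b+s*t))^k) \<in> borel_measurable M"
  by (subst measurable_cong_sets[OF assms refl]) measurable

lemma Mom_integrable:
  fixes M :: "real measure" and b s B :: real
  assumes fm: "finite_measure M" and st: "sets M = sets borel"
    and ae: "AE t in M. \<bar>t/(b+s*t)\<bar> \<le> B"
  shows "integrable M (\<lambda>t. (t/(b+s*t))^k)"
proof -
  interpret finite_measure M by fact
  show ?thesis
  proof (rule integrable_const_bound[where B="B^k"])
    show "AE t in M. norm ((t/(b+s*t))^k) \<le> B^k" using ae
      by eventually_elim (simp add: power_abs power_mono)
    show "(\<lambda>t. (t/(b+s*t))^k) \<in> borel_measurable M" by (rule meas_y[OF st])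
  qed
qed

lemma ae_bound_y:
  fixes M :: "real measure" and b s :: real
  assumes k: "\<kappa> > 0" and ae: "AE t in M. \<kappa>*(1+\<bar>t\<bar>) \<le> \<bar>b+s*t\<bar>"
  shows "AE t in M. \<bar>t/(b+s*t)\<bar> \<le> 1/\<kappa>"
  using ae
proof eventually_elim
  fix t assume h: "\<kappa>*(1+\<bar>t\<bar>) \<le> \<bar>b+s*t\<bar>"
  have p: "\<bar>b+s*t\<bar> > 0" using h k by (smt (verit) mult_pos_pos abs_ge_zero)
  have "\<kappa>*\<bar>t\<bar> \<le> \<bar>b+s*t\<bar>" using h k by (simp add: distrib_left)
  thus "\<bar>t/(b+s*t)\<bar> \<le> 1/\<kappa>" using p k by (simp add: abs_divide divide_simps mult.commute)
qed

lemma ae_shift: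
  fixes M :: "real measure" and b s s0 :: real
  assumes k: "\<kappa> > 0" and ae: "AE t in M. \<kappa>*(1+\<bar>t\<bar>) \<le> \<bar>b+s0*t\<bar>"
    and s: "\<bar>s - s0\<bar> \<le> \<kappa>/2"
  shows "AE t in M. (\<kappa>/2)*(1+\<bar>t\<bar>) \<le> \<bar>b+s*t\<bar>"
  using ae
proof eventually_elim
  fix t assume h: "\<kappa>*(1+\<bar>t\<bar>) \<le> \<bar>b+s0*t\<bar>"
  have e: "b+s*t = (b+s0*t) + (s-s0)*t" by (simp add: algebra_simps)
  have "\<bar>(s-s0)*t\<bar> \<le> (\<kappa>/2)*\<bar>t\<bar>" unfolding abs_mult using s by (intro mult_right_mono) auto
  moreover have "\<bar>b+s*t\<bar> \<ge> \<bar>b+s0*t\<bar> - \<bar>(s-s0)*t\<bar>" unfolding e by linarith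
  moreover have "\<kappa>*(1+\<bar>t\<bar>) = \<kappa> + \<kappa>*\<bar>t\<bar>" "(\<kappa>/2)*(1+\<bar>t\<bar>) = \<kappa>/2 + (\<kappa>/2)*\<bar>t\<bar>"
    "(\<kappa>/2)*\<bar>t\<bar> = (\<kappa>*\<bar>t\<bar>)/2" by (simp_all add: algebra_simps)
  ultimately show "(\<kappa>/2)*(1+\<bar>t\<bar>) \<le> \<bar>b+s*t\<bar>" using h k by linarith
qed



lemma Mom_deriv:
  fixes M :: "real measure" and b s \<kappa> :: real
  assumes fm: "finite_measure M" and st: "sets M = sets borel" and kp: "\<kappa> > 0"
    and ae: "AE t in M. \<kappa>*(1+\<bar>t\<bar>) \<le> \<bar>b+s*t\<bar>" and k: "k \<in> {1,2,3::nat}"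
  shows "(Mom M b k has_real_derivative (- real k * Mom M b (Suc k) s)) (at s)"
proof -
  interpret finite_measure M by fact
  define C where "C = 100 * (1/\<kappa>+1)^5"
  have yb: "AE t in M. \<bar>t/(b+s*t)\<bar> \<le> 1/\<kappa>" by (rule ae_bound_y[OF kp ae])
  show ?thesis
  proof (rule deriv_from_quad[where \<delta>="\<kappa>/2" and K="C * measure M (space M)"])
    show "\<kappa>/2 > 0" using kp by simp
    fix h :: real assume h: "\<bar>h\<bar> < \<kappa>/2"
    have sh: "\<bar>(s+h) - s\<bar> \<le> \<kappa>/2" using h by simp
    have ae2: "AE t in M. (\<kappa>/2)*(1+\<bar>t\<bar>) \<le> \<bar>b+(s+h)*t\<bar>" by (rule ae_shift[OF kp ae sh])
    have zb: "AE t in M. \<bar>t/(b+(s+h)*t)\<bar> \<le> 1/(\<kappa>/2)" by (rule ae_bound_y[OF _ ae2]) (use kp in simp)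
    have iz: "integrable M (\<lambda>t. (t/(b+(s+h)*t))^k)" by (rule Mom_integrable[OF fm st zb])
    have iy: "integrable M (\<lambda>t. (t/(b+s*t))^k)" by (rule Mom_integrable[OF fm st yb])
    have iy1: "integrable M (\<lambda>t. (t/(b+s*t))^(Suc k))" by (rule Mom_integrable[OF fm st yb])
    define R where "R t = (t/(b+(s+h)*t))^k - (t/(b+s*t))^k + (h * real k) * (t/(b+s*t))^(Suc k)" for t
    have iR: "integrable M R" unfolding R_def
      by (intro Bochner_Integration.integrable_add Bochner_Integration.integrable_diff integrable_mult_right iz iy iy1)
    have eqR: "Mom M b k (s+h) - Mom M b k s - h * (- real k * Mom M b (Suc k) s) = integral\<^sup>L M R"
    proof -
      have "integral\<^sup>L M R = Mom M b k (s+h) - Mom M b k s + (h * real k) * Mom M b (Suc k) s"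
        unfolding R_def Mom_def using iz iy iy1
        by (simp add: Bochner_Integration.integral_add Bochner_Integration.integral_diff integrable_mult_right del: power_Suc)
      thus ?thesis by (simp add: algebra_simps)
    qed
    have Rb: "AE t in M. \<bar>R t\<bar> \<le> h\<^sup>2 * C"
      using ae yb
    proof eventually_elim
      fix t assume a1: "\<kappa>*(1+\<bar>t\<bar>) \<le> \<bar>b+s*t\<bar>" and a2: "\<bar>t/(b+s*t)\<bar> \<le> 1/\<kappa>"
      define y where "y = t/(b+s*t)"
      have nz: "b + s*t \<noteq> 0" using a1 kp by (smt (verit) mult_pos_pos abs_ge_zero)
      have "\<bar>h*y\<bar> \<le> (\<kappa>/2) * (1/\<kappa>)" unfolding abs_mult y_def using h a2
        by (intro mult_mono) auto
      hence hy: "\<bar>h*y\<bar> \<le> 1/2" using kp by simp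
      have nz2: "1 + h*y \<noteq> 0" using hy by linarith
      have z: "t/(b+(s+h)*t) = y/(1+h*y)"
      proof -
        have e: "b+(s+h)*t = (b+s*t)*(1+h*y)" unfolding y_def using nz by (simp add: field_simps)
        have "t/(b+(s+h)*t) = t/((b+s*t)*(1+h*y))" by (simp only: e)
        also have "\<dots> = (t/(b+s*t))/(1+h*y)" by (simp only: divide_divide_eq_left)
        also have "\<dots> = y/(1+h*y)" by (simp only: y_def[symmetric])
        finally show ?thesis .
      qed
      have "R t = (y/(1+h*y))^k - y^k + h*k*y^(k+1)" unfolding R_def z y_def by simp
      also have "\<bar>\<dots>\<bar> \<le> h\<^sup>2 * (100 * (1/\<kappa>+1)^5)" by (rule rem_bound[OF a2[folded y_def] hy k])
      finally show "\<bar>R t\<bar> \<le> h\<^sup>2 * C" unfolding C_def .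
    qed
    have "\<bar>integral\<^sup>L M R\<bar> \<le> (\<integral>t. \<bar>R t\<bar> \<partial>M)" using integral_norm_bound[of M R] by simp
    also have "\<dots> \<le> (\<integral>t. h\<^sup>2 * C \<partial>M)"
      using Rb iR by (intro integral_mono_AE) auto
    also have "\<dots> = C * measure M (space M) * h\<^sup>2" by (simp add: mult_ac)
    finally show "\<bar>Mom M b k (s+h) - Mom M b k s - h * (- real k * Mom M b (Suc k) s)\<bar> \<le> C * measure M (space M) * h\<^sup>2"
      unfolding eqR .
  qed
qed



lemma ae_supp:
  fixes M :: "real measure"
  assumes st: "sets M = sets borel"
  shows "AE t in M. t \<in> msupp M"
proof -
  define F where "F = {ball x e | x e. e > 0 \<and> emeasure M (ball x e) = 0}"
  have "\<And>S. S \<in> F \<Longrightarrow> open S" unfolding F_def by auto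
  then obtain F' where F': "F' \<subseteq> F" "countable F'" "\<Union>F' = \<Union>F" by (rule Lindelof)
  have "AE t in M. \<forall>B\<in>F'. t \<notin> B"
  proof (rule AE_ball_countable'[OF _ F'(2)])
    fix B assume "B \<in> F'"
    hence "B \<in> F" using F' by auto
    then obtain x e where B: "B = ball x e" "emeasure M (ball x e) = 0" unfolding F_def by auto
    have "B \<in> sets M" unfolding B st by simp
    hence "B \<in> null_sets M" using B by (simp add: null_sets_def)
    thus "AE t in M. t \<notin> B" by (rule AE_not_in)
  qed
  thus ?thesis
  proof eventually_elim
    fix t assume h: "\<forall>B\<in>F'. t \<notin> B"
    show "t \<in> msupp M"
    proof (rule ccontr)
      assume "t \<notin> msupp M"
      then obtain e where e: "e > 0" "\<not> emeasure M (ball t e) > 0" unfolding msupp_def by auto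
      hence "emeasure M (ball t e) = 0" by (simp add: not_gr_zero)
      hence "ball t e \<in> F" using e unfolding F_def by auto
      moreover have "t \<in> ball t e" using e by simp
      ultimately have "t \<in> \<Union>F" by blast
      hence "t \<in> \<Union>F'" using F'(3) by simp
      thus False using h by auto
    qed
  qed
qed

lemma kappa_exists:
  fixes M :: "real measure" and d :: real
  assumes st: "sets M = sets borel" and pos: "AE t in M. 0 \<le> t" and dD: "d \<in> Dset M"
  shows "\<exists>\<kappa>>0. AE t in M. \<kappa>*(1+\<bar>t\<bar>) \<le> \<bar>1 + d*t\<bar>"
proof (cases "d = 0")
  case True
  hence cpt: "compact (msupp M)" using dD unfolding Dset_def by (auto split: if_splits)
  then obtain R where R: "\<And>x. x \<in> msupp M \<Longrightarrow> norm x \<le> R"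
    using compact_imp_bounded bounded_iff by metis
  show ?thesis
  proof (intro exI[of _ "1/(1+\<bar>R\<bar>)"] conjI)
    show "1/(1+\<bar>R\<bar>) > 0" by (simp add: add_pos_nonneg)
    show "AE t in M. 1/(1+\<bar>R\<bar>)*(1+\<bar>t\<bar>) \<le> \<bar>1 + d*t\<bar>"
      using ae_supp[OF st]
    proof eventually_elim
      fix t assume "t \<in> msupp M"
      hence "\<bar>t\<bar> \<le> \<bar>R\<bar>" using R by force
      hence "(1+\<bar>t\<bar>)/(1+\<bar>R\<bar>) \<le> 1" by (simp add: divide_le_eq add_pos_nonneg)
      thus "1/(1+\<bar>R\<bar>)*(1+\<bar>t\<bar>) \<le> \<bar>1 + d*t\<bar>" using True by simp
    qed
  qed
next
  case False
  hence "- inverse d \<notin> msupp M" using dD unfolding Dset_def by (auto split: if_splits)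
  then obtain e where e: "e > 0" "\<not> emeasure M (ball (- inverse d) e) > 0" unfolding msupp_def by auto
  hence "emeasure M (ball (- inverse d) e) = 0" by (simp add: not_gr_zero)
  moreover have "ball (- inverse d) e \<in> sets M" unfolding st by simp
  ultimately have "ball (- inverse d) e \<in> null_sets M" by (simp add: null_sets_def)
  hence nb: "AE t in M. t \<notin> ball (- inverse d) e" by (rule AE_not_in)
  show ?thesis
  proof (cases "d > 0")
    case True
    show ?thesis
    proof (intro exI[of _ "min 1 d"] conjI)
      show "min 1 d > 0" using True by simp
      show "AE t in M. min 1 d*(1+\<bar>t\<bar>) \<le> \<bar>1 + d*t\<bar>"
        using pos
      proof eventually_elim
        fix t :: real assume t: "0 \<le> t"
        have "min 1 d * t \<le> d * t" using t by (intro mult_right_mono) auto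
        moreover have "min 1 d \<le> 1" by simp
        moreover have "0 \<le> d*t" using t True by simp
        ultimately show "min 1 d*(1+\<bar>t\<bar>) \<le> \<bar>1 + d*t\<bar>" using t by (simp add: distrib_left)
      qed
    qed
  next
    case dneg: False
    hence dn: "d < 0" using \<open>d \<noteq> 0\<close> by simp
    define p where "p = - inverse d"
    have pp: "p > 0" unfolding p_def using dn by simp
    define m where "m = min (e/(1+2*p)) (p/(2*p+1))"
    have mp: "m > 0" unfolding m_def using pp e by simp
    show ?thesis
    proof (intro exI[of _ "\<bar>d\<bar> * m"] conjI)
      show "\<bar>d\<bar> * m > 0" using mp dn by (intro mult_pos_pos) auto
      show "AE t in M. (\<bar>d\<bar> * m)*(1+\<bar>t\<bar>) \<le> \<bar>1 + d*t\<bar>"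
        using pos nb
      proof eventually_elim
        fix t :: real assume t: "0 \<le> t" and tb: "t \<notin> ball (- inverse d) e"
        have tp: "\<bar>t - p\<bar> \<ge> e" using tb unfolding p_def by (auto simp: dist_real_def abs_minus_commute)
        have eq: "1 + d*t = d * (t - p)" unfolding p_def using dn by (simp add: field_simps)
        have key: "m*(1+t) \<le> \<bar>t - p\<bar>"
        proof (cases "t \<le> 2*p")
          case True
          have "m*(1+t) \<le> (e/(1+2*p))*(1+t)" unfolding m_def using t by (intro mult_right_mono) auto
          also have "\<dots> \<le> (e/(1+2*p))*(1+2*p)" using True e pp by (intro mult_left_mono) auto
          also have "\<dots> = e" using pp by simp
          finally show ?thesis using tp by linarith
        next
          case False
          have "m*(1+t) \<le> (p/(2*p+1))*(1+t)" unfolding m_def using t by (intro mult_right_mono) auto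
          also have "\<dots> \<le> t - p"
          proof -
            have a: "2*p*(1+p) \<le> t*(1+p)" using False pp by (intro mult_right_mono) auto
            have i: "p*(1+t) - (t-p)*(2*p+1) = 2*p*(1+p) - t*(1+p)" by (simp add: algebra_simps)
            have "p*(1+t) \<le> (t-p)*(2*p+1)" using a i by linarith
            thus ?thesis using pp by (simp add: divide_le_eq mult.commute)
          qed
          finally show ?thesis by linarith
        qed
        have "(\<bar>d\<bar> * m)*(1+\<bar>t\<bar>) = \<bar>d\<bar> * (m*(1+t))" using t by simp
        also have "\<dots> \<le> \<bar>d\<bar> * \<bar>t - p\<bar>" using key by (intro mult_left_mono) auto
        also have "\<dots> = \<bar>1 + d*t\<bar>" unfolding eq abs_mult ..
        finally show "(\<bar>d\<bar> * m)*(1+\<bar>t\<bar>) \<le> \<bar>1 + d*t\<bar>" .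
      qed
    qed
  qed
qed



lemma int_lin3:
  fixes M :: "real measure" and f1 f2 f3 :: "real \<Rightarrow> real" and \<alpha> \<beta> \<gamma> :: real
  assumes "integrable M f1" "integrable M f2" "integrable M f3"
  shows "(\<integral>x. \<alpha> * f1 x - \<beta> * f2 x + \<gamma> * f3 x \<partial>M) = \<alpha> * integral\<^sup>L M f1 - \<beta> * integral\<^sup>L M f2 + \<gamma> * integral\<^sup>L M f3"
proof -
  have i1a: "integrable M (\<lambda>x. \<alpha>*f1 x)" using assms(1) by auto
  have i1b: "integrable M (\<lambda>x. \<beta>*f2 x)" using assms(2) by auto
  have i1c: "integrable M (\<lambda>x. \<gamma>*f3 x)" using assms(3) by auto
  note i1 = i1a i1b i1c
  have i2: "integrable M (\<lambda>x. \<alpha>*f1 x - \<beta>*f2 x)" using i1(1,2) by (rule Bochner_Integration.integrable_diff)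
  have "(\<integral>x. \<alpha> * f1 x - \<beta> * f2 x + \<gamma> * f3 x \<partial>M) = (\<integral>x. \<alpha> * f1 x - \<beta> * f2 x \<partial>M) + (\<integral>x. \<gamma> * f3 x \<partial>M)"
    by (rule Bochner_Integration.integral_add[OF i2 i1(3)])
  also have "(\<integral>x. \<alpha> * f1 x - \<beta> * f2 x \<partial>M) = (\<integral>x. \<alpha> * f1 x \<partial>M) - (\<integral>x. \<beta> * f2 x \<partial>M)"
    by (rule Bochner_Integration.integral_diff[OF i1(1) i1(2)])
  finally show ?thesis by simp
qed

lemma final_contra:
  fixes nu nt :: "real measure" and b s0 dta c B1 B2 :: real
  assumes fu: "finite_measure nu" and ft: "finite_measure nt"
    and su: "sets nu = sets borel" and stt: "sets nt = sets borel"
    and yb: "AE t in nt. \<bar>t/(b+s0*t)\<bar> \<le> B1"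
    and xb: "AE t in nu. \<bar>t/(1+dta*t)\<bar> \<le> B2"
    and c: "c > 0"
    and h0: "Mom nt b 1 s0 = dta"
    and h1: "c * Mom nt b 2 s0 * Mom nu 1 2 dta = 1"
    and h2: "c * Mom nt b 3 s0 * (Mom nu 1 2 dta)^2 = Mom nt b 2 s0 * Mom nu 1 3 dta"
    and h3: "c^2 * Mom nt b 4 s0 * (Mom nu 1 2 dta)^3 - 2*c*Mom nt b 3 s0 * Mom nu 1 2 dta * Mom nu 1 3 dta
             + Mom nt b 2 s0 * Mom nu 1 4 dta = 0"
  shows False
proof -
  define y where "y t = t/(b+s0*t)" for t
  define x where "x t = t/(1+dta*t)" for t
  define p where "p k = Mom nt b k s0" for k
  define q where "q k = Mom nu 1 k dta" for k
  have pI: "p k = (\<integral>t. (y t)^k \<partial>nt)" for k unfolding p_def Mom_def y_def ..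
  have qI: "q k = (\<integral>t. (x t)^k \<partial>nu)" for k unfolding q_def Mom_def x_def ..
  have iy: "integrable nt (\<lambda>t. (y t)^k)" for k unfolding y_def by (rule Mom_integrable[OF ft stt yb])
  have ix: "integrable nu (\<lambda>t. (x t)^k)" for k unfolding x_def by (rule Mom_integrable[OF fu su xb])
  have p2: "p 2 \<ge> 0" unfolding pI by (rule integral_nonneg_AE) simp
  have q2: "q 2 \<ge> 0" unfolding qI by (rule integral_nonneg_AE) simp
  have h1': "c * p 2 * q 2 = 1" using h1 unfolding p_def q_def .
  have p2p: "p 2 > 0" using p2 h1' by (cases "p 2 = 0") auto
  have q2p: "q 2 > 0" using q2 h1' by (cases "q 2 = 0") auto
  define A where "A = (\<integral>t. (y t)^2 * (c*(q 2)^2 * y t - q 3)^2 \<partial>nt)"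
  define B where "B = (\<integral>t. (x t)^2 * (q 3 - q 2 * x t)^2 \<partial>nu)"
  have A0: "A \<ge> 0" unfolding A_def by (rule integral_nonneg_AE) simp
  have B0: "B \<ge> 0" unfolding B_def by (rule integral_nonneg_AE) simp
  have Aeq: "A = (c^2*(q 2)^4) * p 4 - (2*c*(q 2)^2*q 3) * p 3 + (q 3)^2 * p 2"
  proof -
    have "A = (\<integral>t. (c^2*(q 2)^4) * (y t)^4 - (2*c*(q 2)^2*q 3) * (y t)^3 + (q 3)^2 * (y t)^2 \<partial>nt)"
      unfolding A_def by (rule Bochner_Integration.integral_cong) (simp_all add: algebra_simps power2_eq_square eval_nat_numeral)
    also have "\<dots> = (c^2*(q 2)^4) * p 4 - (2*c*(q 2)^2*q 3) * p 3 + (q 3)^2 * p 2"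
      unfolding pI by (rule int_lin3[OF iy iy iy])
    finally show ?thesis .
  qed
  have Beq: "B = (q 3)^2 * q 2 - (2*q 2*q 3) * q 3 + (q 2)^2 * q 4"
  proof -
    have "B = (\<integral>t. (q 3)^2 * (x t)^2 - (2*q 2*q 3) * (x t)^3 + (q 2)^2 * (x t)^4 \<partial>nu)"
      unfolding B_def by (rule Bochner_Integration.integral_cong) (simp_all add: algebra_simps power2_eq_square eval_nat_numeral)
    also have "\<dots> = (q 3)^2 * q 2 - (2*q 2*q 3) * q 3 + (q 2)^2 * q 4"
      unfolding qI by (rule int_lin3[OF ix ix ix])
    finally show ?thesis .
  qed
  have E0: "c^2 * p 4 * (q 2)^3 - 2*c*p 3 * q 2 * q 3 + p 2 * q 4 = 0" using h3 unfolding p_def q_def .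
  have id: "q 2 * (c^2 * p 4 * (q 2)^3 - 2*c*p 3 * q 2 * q 3 + p 2 * q 4) * q 2 = A * q 2 + B * p 2"
    unfolding Aeq Beq by (simp add: algebra_simps power2_eq_square eval_nat_numeral)
  hence "A * q 2 + B * p 2 = 0" using E0 by simp
  moreover have "A * q 2 \<ge> 0" "B * p 2 \<ge> 0" using A0 B0 p2 q2 by simp_all
  ultimately have "A * q 2 = 0" "B * p 2 = 0" by linarith+
  hence A00: "A = 0" and B00: "B = 0" using p2p q2p by simp_all
  have iA: "integrable nt (\<lambda>t. (y t)^2 * (c*(q 2)^2 * y t - q 3)^2)"
  proof -
    have "integrable nt (\<lambda>t. (c^2*(q 2)^4) * (y t)^4 - (2*c*(q 2)^2*q 3) * (y t)^3 + (q 3)^2 * (y t)^2)"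
      by (intro Bochner_Integration.integrable_add Bochner_Integration.integrable_diff integrable_mult_right iy)
    thus ?thesis by (rule Bochner_Integration.integrable_cong[THEN iffD1, rotated 2])
       (simp_all add: algebra_simps power2_eq_square eval_nat_numeral)
  qed
  have iB: "integrable nu (\<lambda>t. (x t)^2 * (q 3 - q 2 * x t)^2)"
  proof -
    have "integrable nu (\<lambda>t. (q 3)^2 * (x t)^2 - (2*q 2*q 3) * (x t)^3 + (q 2)^2 * (x t)^4)"
      by (intro Bochner_Integration.integrable_add Bochner_Integration.integrable_diff integrable_mult_right ix)
    thus ?thesis by (rule Bochner_Integration.integrable_cong[THEN iffD1, rotated 2])
       (simp_all add: algebra_simps power2_eq_square eval_nat_numeral)
  qed
  have aeA: "AE t in nt. (y t)^2 * (c*(q 2)^2 * y t - q 3)^2 = 0"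
    using A00 integral_nonneg_eq_0_iff_AE[OF iA] unfolding A_def by simp
  have aeB: "AE t in nu. (x t)^2 * (q 3 - q 2 * x t)^2 = 0"
    using B00 integral_nonneg_eq_0_iff_AE[OF iB] unfolding B_def by simp
  have "(\<integral>t. (c*(q 2)^2) * (y t)^2 - q 3 * (y t)^1 + 0 * (y t)^1 \<partial>nt) = 0"
  proof (intro integral_eq_zero_AE)
    show "AE t in nt. (c*(q 2)^2) * (y t)^2 - q 3 * (y t)^1 + 0 * (y t)^1 = 0"
      using aeA
    proof eventually_elim
      fix t assume "(y t)^2 * (c*(q 2)^2 * y t - q 3)^2 = 0"
      hence "y t = 0 \<or> c*(q 2)^2 * y t - q 3 = 0" by simp
      moreover have "(c*(q 2)^2) * (y t)^2 - q 3 * (y t)^1 + 0 * (y t)^1 = y t * (c*(q 2)^2 * y t - q 3)"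
        by (simp add: algebra_simps power2_eq_square)
      ultimately show "(c*(q 2)^2) * (y t)^2 - q 3 * (y t)^1 + 0 * (y t)^1 = 0" by auto
    qed
  qed
  hence "(c*(q 2)^2) * p 2 - q 3 * p 1 + 0 * p 1 = 0"
    unfolding pI by (subst (asm) int_lin3[OF iy iy iy]) simp
  moreover have "(c*(q 2)^2) * p 2 = (c * p 2 * q 2) * q 2" by (simp add: power2_eq_square algebra_simps)
  ultimately have "q 2 = q 3 * p 1" using h1' by simp
  hence q3: "q 3 \<noteq> 0" and qq: "q 2 = q 3 * dta" using q2p h0 unfolding p_def by auto
  have "AE t in nu. x t = 0"
    using aeB
  proof eventually_elim
    fix t assume "(x t)^2 * (q 3 - q 2 * x t)^2 = 0"
    hence "x t = 0 \<or> q 3 - q 2 * x t = 0" by simp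
    moreover have "q 3 - q 2 * x t = q 3 * (1 - dta * x t)" unfolding qq by (simp add: algebra_simps)
    moreover have "dta * x t \<noteq> 1"
    proof (cases "1 + dta * t = 0")
      case True thus ?thesis unfolding x_def by simp
    next
      case False
      hence "dta * x t = (dta*t)/(1+dta*t)" unfolding x_def by simp
      also have "\<dots> \<noteq> 1" using False by (simp add: divide_eq_1_iff)
      finally show ?thesis .
    qed
    ultimately show "x t = 0" using q3 by auto
  qed
  hence "q 2 = 0" unfolding qI
    by (intro integral_eq_zero_AE) (auto elim!: eventually_mono)
  thus False using q2p by simp
qed



theorem lemma3p14:
  fixes c a dta :: real and nu nt :: "real measure"
  assumes "c > 0"
    and "prob_Rplus nu" and "prob_Rplus nt"
    and "nu \<noteq> return borel 0" and "nt \<noteq> return borel 0"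
    and "\<not> (\<exists>x. nu = return borel x) \<or> \<not> (\<exists>x. nt = return borel x)"
    and "dta \<in> Dset nu" and "a \<noteq> 0"
    and "c * (\<integral>t. t / (- a * (1 + dta * t)) \<partial>nu) \<in> Dset nt"
    and "Fmap c nu nt dta a = 0"
    and "deriv (\<lambda>d. Fmap c nu nt d a) dta = 0"
  shows "(deriv ^^ 2) (\<lambda>d. Fmap c nu nt d a) dta = 0 \<longrightarrow>
         (deriv ^^ 3) (\<lambda>d. Fmap c nu nt d a) dta \<noteq> 0"
proof (intro impI)
  note cpos = assms(1) and anz = assms(8)
  define F where "F = (\<lambda>d. Fmap c nu nt d a)"
  assume D2: "(deriv ^^ 2) (\<lambda>d. Fmap c nu nt d a) dta = 0"
  have pu: "prob_space nu" and su: "sets nu = sets borel" and posu: "AE t in nu. 0 \<le> t"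
    using assms(2) unfolding prob_Rplus_def by auto
  have pt: "prob_space nt" and stt: "sets nt = sets borel" and post: "AE t in nt. 0 \<le> t"
    using assms(3) unfolding prob_Rplus_def by auto
  have fu: "finite_measure nu" using pu by (simp add: prob_space_def)
  have ft: "finite_measure nt" using pt by (simp add: prob_space_def)
  obtain \<kappa>1 where k1: "\<kappa>1 > 0" "AE t in nu. \<kappa>1*(1+\<bar>t\<bar>) \<le> \<bar>1 + dta*t\<bar>"
    using kappa_exists[OF su posu assms(7)] by auto
  define Q where "Q = Mom nu 1"
  define P where "P = Mom nt (-a)"
  have gQ: "(\<integral>u. u/(1+u*d) \<partial>nu) = Q 1 d" for d
    unfolding Q_def Mom_def by (rule Bochner_Integration.integral_cong) (simp_all add: mult.commute)
  define dA where "dA = c * (\<integral>t. t / (- a * (1 + dta * t)) \<partial>nu)"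
  have dAeq: "dA = - (c * Q 1 dta) / a"
  proof -
    have "(\<integral>t. t / (- a * (1 + dta * t)) \<partial>nu) = (\<integral>t. (t/(1+dta*t))^1 / (-a) \<partial>nu)"
      by (rule Bochner_Integration.integral_cong) (simp_all add: mult.commute)
    also have "\<dots> = Q 1 dta / (-a)" unfolding Q_def Mom_def by (rule integral_divide_zero)
    finally show ?thesis unfolding dA_def by simp
  qed
  obtain \<kappa>0 where k0: "\<kappa>0 > 0" "AE t in nt. \<kappa>0*(1+\<bar>t\<bar>) \<le> \<bar>1 + dA*t\<bar>"
    using kappa_exists[OF stt post assms(9)[folded dA_def]] by auto
  define s0 where "s0 = c * Q 1 dta"
  define \<kappa>2 where "\<kappa>2 = \<bar>a\<bar> * \<kappa>0"
  have k2a: "\<kappa>2 > 0" unfolding \<kappa>2_def using k0 anz by simp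
  have k2b: "AE t in nt. \<kappa>2*(1+\<bar>t\<bar>) \<le> \<bar>-a + s0*t\<bar>"
    using k0(2)
  proof eventually_elim
    fix t assume h: "\<kappa>0*(1+\<bar>t\<bar>) \<le> \<bar>1 + dA*t\<bar>"
    have "-a + s0*t = -a * (1 + dA*t)" unfolding s0_def dAeq using anz by (simp add: field_simps)
    hence "\<bar>-a + s0*t\<bar> = \<bar>a\<bar> * \<bar>1 + dA*t\<bar>" by (simp add: abs_mult)
    thus "\<kappa>2*(1+\<bar>t\<bar>) \<le> \<bar>-a + s0*t\<bar>" unfolding \<kappa>2_def using h
      by (simp add: mult.assoc mult_left_mono)
  qed
  have FP: "F d = P 1 (c * Q 1 d) - d" for d
    unfolding F_def Fmap_def gQ P_def Mom_def by (simp add: mult_ac)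
  have DQ: "(Q k has_real_derivative (- real k * Q (Suc k) d)) (at d)"
    if "\<bar>d - dta\<bar> \<le> \<kappa>1/2" "k \<in> {1,2,3}" for d k
  proof -
    have ae: "AE t in nu. (\<kappa>1/2)*(1+\<bar>t\<bar>) \<le> \<bar>1 + d*t\<bar>" by (rule ae_shift[OF k1 that(1)])
    show ?thesis unfolding Q_def by (rule Mom_deriv[OF fu su _ ae that(2)]) (use k1 in simp)
  qed
  have DP: "(P k has_real_derivative (- real k * P (Suc k) s)) (at s)"
    if "\<bar>s - s0\<bar> \<le> \<kappa>2/2" "k \<in> {1,2,3}" for s k
  proof -
    have ae: "AE t in nt. (\<kappa>2/2)*(1+\<bar>t\<bar>) \<le> \<bar>-a + s*t\<bar>" by (rule ae_shift[OF k2a k2b that(1)])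
    show ?thesis unfolding P_def by (rule Mom_deriv[OF ft stt _ ae that(2)]) (use k2a in simp)
  qed
  have "isCont (Q 1) dta" by (rule DERIV_isCont[OF DQ[of dta 1]]) (use k1 in simp_all)
  hence "isCont (\<lambda>d. c * Q 1 d) dta" by (rule continuous_mult[OF continuous_const])
  then obtain r where r: "r > 0" "\<And>d. dist d dta < r \<Longrightarrow> dist (c * Q 1 d) (c * Q 1 dta) < \<kappa>2/2"
    using k2a unfolding continuous_at_eps_delta by (metis half_gt_zero)
  define U where "U = ball dta (min r (\<kappa>1/2))"
  have oU: "open U" unfolding U_def by simp
  have dU: "dta \<in> U" unfolding U_def using r k1 by simp
  have inU1: "\<bar>d - dta\<bar> \<le> \<kappa>1/2" if "d \<in> U" for d
    using that unfolding U_def by (simp add: dist_real_def abs_minus_commute)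
  have inU2: "\<bar>c * Q 1 d - s0\<bar> \<le> \<kappa>2/2" if "d \<in> U" for d
  proof -
    have "dist d dta < r" using that unfolding U_def by (simp add: dist_commute)
    from r(2)[OF this] show ?thesis unfolding s0_def dist_real_def by simp
  qed
  have DR: "((\<lambda>d. P k (c * Q 1 d)) has_real_derivative
              ((- real k * P (Suc k) (c * Q 1 d)) * (c * (- real 1 * Q (Suc 1) d)))) (at d)"
    if "d \<in> U" "k \<in> {1,2,3}" for d k
    by (rule DERIV_chain2[OF DP[OF inU2[OF that(1)] that(2)] DERIV_cmult[OF DQ[OF inU1[OF that(1)]]]]) simp
  have DR1: "((\<lambda>d. P 1 (c * Q 1 d)) has_real_derivative (c * P 2 (c * Q 1 d) * Q 2 d)) (at d)"
    if "d \<in> U" for d using DR[OF that, of 1] by (simp add: numeral_2_eq_2 algebra_simps)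
  have DR2: "((\<lambda>d. P 2 (c * Q 1 d)) has_real_derivative (2 * c * P 3 (c * Q 1 d) * Q 2 d)) (at d)"
    if "d \<in> U" for d using DR[OF that, of 2] by (simp add: numeral_2_eq_2 numeral_3_eq_3 algebra_simps)
  have DR3: "((\<lambda>d. P 3 (c * Q 1 d)) has_real_derivative (3 * c * P 4 (c * Q 1 d) * Q 2 d)) (at d)"
    if "d \<in> U" for d using DR[OF that, of 3] by (simp add: numeral_2_eq_2 numeral_3_eq_3 eval_nat_numeral algebra_simps)
  have DQ2: "(Q 2 has_real_derivative (- 2 * Q 3 d)) (at d)" if "d \<in> U" for d
    using DQ[OF inU1[OF that], of 2] by (simp add: numeral_3_eq_3 numeral_2_eq_2)
  have DQ3: "(Q 3 has_real_derivative (- 3 * Q 4 d)) (at d)" if "d \<in> U" for d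
    using DQ[OF inU1[OF that], of 3] by (simp add: eval_nat_numeral)
  define F1 where "F1 = (\<lambda>d. c * P 2 (c*Q 1 d) * Q 2 d - 1)"
  define F2 where "F2 = (\<lambda>d. 2*c^2 * P 3 (c*Q 1 d) * (Q 2 d)^2 - 2*c * P 2 (c*Q 1 d) * Q 3 d)"
  define F3 where "F3 = (\<lambda>d. 6*c^3*P 4 (c*Q 1 d)*(Q 2 d)^3 - 12*c^2*P 3 (c*Q 1 d)*Q 2 d*Q 3 d
                          + 6*c*P 2 (c*Q 1 d)*Q 4 d)"
  have dF: "(F has_real_derivative F1 d) (at d)" if "d \<in> U" for d
  proof -
    have "F = (\<lambda>d. P 1 (c * Q 1 d) - d)" using FP by auto
    moreover have "((\<lambda>d. P 1 (c * Q 1 d) - d) has_real_derivative (c * P 2 (c * Q 1 d) * Q 2 d - 1)) (at d)"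
      by (intro DERIV_diff DR1[OF that] DERIV_ident)
    ultimately show ?thesis unfolding F1_def by simp
  qed
  have dF1: "(F1 has_real_derivative F2 d) (at d)" if "d \<in> U" for d
  proof -
    have "((\<lambda>d. c * P 2 (c*Q 1 d) * Q 2 d - 1) has_real_derivative
       (c * (2 * c * P 3 (c * Q 1 d) * Q 2 d) * Q 2 d + (- 2 * Q 3 d) * (c * P 2 (c*Q 1 d)) - 0)) (at d)"
      by (intro DERIV_diff DERIV_mult DERIV_cmult DR2[OF that] DQ2[OF that] DERIV_const)
    thus ?thesis unfolding F1_def F2_def by (simp add: algebra_simps power2_eq_square)
  qed
  have dF2: "(F2 has_real_derivative F3 dta) (at dta)"
  proof -
    have sq: "((\<lambda>x. (Q 2 x)^2) has_real_derivative 2 * Q 2 dta * (- 2 * Q 3 dta)) (at dta)"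
      using DERIV_chain2[OF DERIV_pow[of 2 "Q 2 dta"] DQ2[OF dU]] by simp
    have "((\<lambda>d. 2*c^2 * P 3 (c*Q 1 d) * (Q 2 d)^2 - 2*c * P 2 (c*Q 1 d) * Q 3 d) has_real_derivative
       ((2*c^2 * (3 * c * P 4 (c * Q 1 dta) * Q 2 dta)) * (Q 2 dta)^2
          + (2 * Q 2 dta * (- 2 * Q 3 dta)) * (2*c^2 * P 3 (c*Q 1 dta))
        - ((2*c * (2 * c * P 3 (c * Q 1 dta) * Q 2 dta)) * Q 3 dta + (- 3 * Q 4 dta) * (2*c * P 2 (c*Q 1 dta))))) (at dta)"
      by (intro DERIV_diff DERIV_mult DERIV_cmult DR3[OF dU] DR2[OF dU] DQ2[OF dU] DQ3[OF dU] sq)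
    thus ?thesis unfolding F2_def F3_def by (simp add: algebra_simps power2_eq_square power3_eq_cube)
  qed
  have ev: "eventually (\<lambda>x. x \<in> U) (nhds d)" if "d \<in> U" for d
    by (rule eventually_nhds_in_open[OF oU that])
  have dd1: "deriv F x = F1 x" if "x \<in> U" for x by (rule DERIV_imp_deriv[OF dF[OF that]])
  have dd2: "deriv (deriv F) x = F2 x" if "x \<in> U" for x
  proof -
    have "deriv (deriv F) x = deriv F1 x"
      by (rule deriv_cong_ev[OF eventually_mono[OF ev[OF that]] refl]) (rule dd1)
    also have "\<dots> = F2 x" by (rule DERIV_imp_deriv[OF dF1[OF that]])
    finally show ?thesis .
  qed
  have dd3: "deriv (deriv (deriv F)) dta = F3 dta"
  proof -
    have "deriv (deriv (deriv F)) dta = deriv F2 dta"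
      by (rule deriv_cong_ev[OF eventually_mono[OF ev[OF dU]] refl]) (rule dd2)
    also have "\<dots> = F3 dta" by (rule DERIV_imp_deriv[OF dF2])
    finally show ?thesis .
  qed
  have pow2: "(deriv ^^ 2) F = deriv (deriv F)" by (simp add: numeral_2_eq_2)
  have pow3: "(deriv ^^ 3) F = deriv (deriv (deriv F))" by (simp add: numeral_3_eq_3)
  have s0e: "c * Q 1 dta = s0" unfolding s0_def ..
  have h0: "P 1 s0 = dta" using assms(10) FP[of dta] s0e unfolding F_def by simp
  have h1: "c * P 2 s0 * Q 2 dta = 1"
    using assms(11) dd1[OF dU] s0e unfolding F_def F1_def by simp
  have "F2 dta = 0" using D2 dd2[OF dU] pow2 unfolding F_def by simp
  hence h2: "c * P 3 s0 * (Q 2 dta)^2 = P 2 s0 * Q 3 dta"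
    unfolding F2_def s0e using cpos by (simp add: power2_eq_square algebra_simps)
  show "(deriv ^^ 3) (\<lambda>d. Fmap c nu nt d a) dta \<noteq> 0"
  proof
    assume "(deriv ^^ 3) (\<lambda>d. Fmap c nu nt d a) dta = 0"
    hence "F3 dta = 0" using dd3 pow3 unfolding F_def by simp
    hence "6*c * (c^2 * P 4 s0 * (Q 2 dta)^3 - 2*c*P 3 s0 * Q 2 dta * Q 3 dta + P 2 s0 * Q 4 dta) = 0"
      unfolding F3_def s0e by (simp add: algebra_simps power2_eq_square power3_eq_cube)
    hence h3: "c^2 * P 4 s0 * (Q 2 dta)^3 - 2*c*P 3 s0 * Q 2 dta * Q 3 dta + P 2 s0 * Q 4 dta = 0"
      using cpos by simp
    show False
      by (rule final_contra[OF fu ft su stt ae_bound_y[OF k2a k2b] ae_bound_y[OF k1] cpos,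
            unfolded P_def[symmetric] Q_def[symmetric], OF h0 h1 h2 h3])
  qed
qed


end
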